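(* Let $D$ be a positive squarefree integer with $N(\varepsilon)=-1$, and let $Z_D(s)=\sum_{n\ge1}F_D(n)^{-s}$ for $\operatorname{Re}s>0$. Then $Z_D$ has meromorphic continuation to $\mathbb{C}$ given by \[ Z_D(s)=q^{s/2}\sum_{k\ge0}\binom{-s}{k}\frac{1}{\varepsilon^{s+2k}+(-1)^{k+1}}, \] and its only poles are simple poles located at $s=-2k+\frac{(2n+k)\pi i}{\log\varepsilon}$ with $k,n\in\mathbb{Z}$, $k\ge0$.
   Context: $D$ positive squarefree, $\mathcal{O}_D$ the ring of integers of $\mathbb{Q}(\sqrt D)\subset\mathbb{R}$, $\varepsilon>1$ its fundamental unit, $\overline{\varepsilon}$ its conjugate, $N$ the norm. $q=D$ if $D\equiv1\bmod4$, else $q=4D$. $F_D(n)=(\varepsilon^n-\overline{\varepsilon}^{\,n})/\sqrt q$. $\binom{-s}{k}=\frac{(-s)(-s-1)\cdots(-s-k+1)}{k!}$. *)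

theory Defs
  imports "HOL-Complex_Analysis.Complex_Analysis" "HOL-Computational_Algebra.Squarefree"
begin

definition ring_of_integers :: "int \<Rightarrow> real set" where
  "ring_of_integers D = {x. \<exists>a b::int. x = (of_int a + of_int b * sqrt (of_int D)) / 2 \<and>
      (if D mod 4 = 1 then even (a - b) else even a \<and> even b)}"

definition units_OD :: "int \<Rightarrow> real set" where
  "units_OD D = {u \<in> ring_of_integers D. \<exists>v \<in> ring_of_integers D. u * v = 1}"

definition is_fundamental_unit :: "int \<Rightarrow> real \<Rightarrow> bool" where
  "is_fundamental_unit D e \<longleftrightarrow> e \<in> units_OD D \<and> e > 1 \<and>
      (\<forall>u \<in> units_OD D. u > 1 \<longrightarrow> e \<le> u)"

definition qconj :: "int \<Rightarrow> real \<Rightarrow> real" where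
  "qconj D x = (THE y. \<exists>a b::rat. x = of_rat a + of_rat b * sqrt (of_int D) \<and>
                                  y = of_rat a - of_rat b * sqrt (of_int D))"

definition qnorm :: "int \<Rightarrow> real \<Rightarrow> real" where
  "qnorm D x = x * qconj D x"

definition qdisc :: "int \<Rightarrow> int" where
  "qdisc D = (if D mod 4 = 1 then D else 4 * D)"

definition F_D :: "int \<Rightarrow> real \<Rightarrow> nat \<Rightarrow> real" where
  "F_D D e n = (e ^ n - qconj D e ^ n) / sqrt (of_int (qdisc D))"

end

theory Submission
  imports Defs
begin


lemma poch_nonneg: "(0::real) \<le> x \<Longrightarrow> 0 \<le> pochhammer x n"
  by (simp add: pochhammer_prod prod_nonneg)

lemma m1sq: "(-1::'a::comm_ring_1)^n * (-1)^n = 1"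
  by (induct n) (auto simp: algebra_simps)

lemma poch_summable:
  fixes R x :: real
  assumes "R \<ge> 0" "0 \<le> x" "x < 1"
  shows "summable (\<lambda>k. pochhammer R k / fact k * x ^ k)"
proof -
  have "(\<lambda>n. ((-R) gchoose n) * (-x)^n) sums (1 + (-x)) powr (-R)"
    by (rule gen_binomial_real) (use assms in auto)
  moreover have "((-R) gchoose n) * (-x)^n = pochhammer R n / fact n * x ^ n" for n
  proof -
    have "((-R) gchoose n) = (-1)^n * pochhammer R n / fact n" by (simp add: gbinomial_pochhammer)
    moreover have "(-x)^n = (-1)^n * x^n" by (rule power_minus)
    ultimately have "((-R) gchoose n) * (-x)^n = ((-1)^n * (-1)^n) * (pochhammer R n / fact n * x ^ n)"
      by simp
    then show ?thesis by (simp only: m1sq mult_1_left)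
  qed
  ultimately show ?thesis by (simp add: sums_iff)
qed

lemma norm_pochhammer_le:
  fixes s :: complex
  shows "norm (pochhammer s k) \<le> pochhammer (norm s) k"
proof (induction k)
  case 0 then show ?case by simp
next
  case (Suc k)
  have "norm (pochhammer s (Suc k)) = norm (pochhammer s k) * norm (s + of_nat k)"
    by (simp add: pochhammer_Suc norm_mult)
  also have "\<dots> \<le> pochhammer (norm s) k * (norm s + of_nat k)"
    by (intro mult_mono Suc norm_triangle_le) (auto simp: poch_nonneg)
  finally show ?case by (simp add: pochhammer_Suc)
qed

lemma norm_gchoose_le:
  fixes s :: complex
  shows "norm ((-s) gchoose k) \<le> pochhammer (norm s) k / fact k"
proof -
  have "norm ((-s) gchoose k) = norm (pochhammer s k) / fact k"
    by (simp add: gbinomial_pochhammer norm_mult norm_divide norm_power)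
  also have "\<dots> \<le> pochhammer (norm s) k / fact k"
    by (intro divide_right_mono norm_pochhammer_le) auto
  finally show ?thesis .
qed

lemma infsum_nonneg_suminf:
  fixes g :: "nat \<Rightarrow> real"
  assumes "summable g" "\<And>n. g n \<ge> 0"
  shows "(g has_sum suminf g) UNIV"
  by (rule norm_summable_imp_has_sum) (use assms in \<open>auto simp: summable_sums\<close>)

lemma swap_lemma:
  fixes a :: "nat \<Rightarrow> nat \<Rightarrow> complex" and B M :: "nat \<Rightarrow> real"
  assumes rows: "\<And>n. (\<lambda>k. a n k) sums r n"
      and cols: "\<And>k. (\<lambda>n. a n k) sums t k"
      and bnd: "\<And>n k. norm (a n k) \<le> B n * M k"
      and B: "summable B" "\<And>n. B n \<ge> 0" and M: "summable M" "\<And>k. M k \<ge> 0"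
  shows "r sums (\<Sum>k. t k)"
proof -
  define f where "f = (\<lambda>(n,k). a n k)"
  have rowabs: "summable (\<lambda>k. norm (a n k))" for n
    by (rule summable_comparison_test[OF _ summable_mult[OF M(1), of "B n"]]) (use bnd in auto)
  have colabs: "summable (\<lambda>n. norm (a n k))" for k
    by (rule summable_comparison_test[OF _ summable_mult2[OF B(1), of "M k"]]) (use bnd in auto)
  have rowinf: "infsum (\<lambda>k. norm (a n k)) UNIV \<le> B n * suminf M" for n
  proof -
    have "infsum (\<lambda>k. norm (a n k)) UNIV = (\<Sum>k. norm (a n k))"
      by (rule infsumI, rule infsum_nonneg_suminf) (use rowabs in auto)
    also have "\<dots> \<le> (\<Sum>k. B n * M k)"
      by (rule suminf_le) (use bnd rowabs summable_mult[OF M(1)] in auto)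
    also have "\<dots> = B n * suminf M" by (rule suminf_mult[OF M(1)])
    finally show ?thesis .
  qed
  have gsum: "(\<lambda>n. norm (B n * suminf M)) summable_on UNIV"
  proof -
    have "summable (\<lambda>n. norm (B n * suminf M))"
      using summable_mult2[OF B(1), of "suminf M"] B(2) M by (simp add: suminf_nonneg)
    then show ?thesis by (subst summable_on_UNIV_nonneg_real_iff) auto
  qed
  have "(\<lambda>x. norm (f x)) summable_on Sigma UNIV (\<lambda>_. UNIV)"
  proof (subst Infinite_Sum.abs_summable_on_Sigma_iff, intro conjI ballI)
    fix n :: nat
    show "(\<lambda>y. norm (f (n, y))) summable_on UNIV"
      unfolding f_def using rowabs[of n] by (subst summable_on_UNIV_nonneg_real_iff) auto
  next
    show "(\<lambda>x. norm (\<Sum>\<^sub>\<infinity>y\<in>UNIV. norm (f (x, y)))) summable_on UNIV"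
    proof (rule Infinite_Sum.abs_summable_on_comparison_test[OF gsum])
      fix n :: nat
      have "norm (\<Sum>\<^sub>\<infinity>y\<in>UNIV. norm (f (n, y))) = (\<Sum>\<^sub>\<infinity>y\<in>UNIV. norm (a n y))"
        unfolding f_def by (simp add: infsum_nonneg)
      also have "\<dots> \<le> B n * suminf M" by (rule rowinf)
      also have "\<dots> = norm (B n * suminf M)" using B(2) M by (simp add: suminf_nonneg)
      finally show "norm (\<Sum>\<^sub>\<infinity>y\<in>UNIV. norm (f (n, y))) \<le> norm (B n * suminf M)" .
    qed
  qed
  hence "f summable_on Sigma UNIV (\<lambda>_. UNIV)" by (rule Infinite_Sum.abs_summable_summable)
  then obtain S where S: "(f has_sum S) (Sigma UNIV (\<lambda>_. UNIV))"
    by (auto simp: summable_on_def)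
  have "(r has_sum S) UNIV"
  proof (rule has_sum_SigmaD[OF S])
    fix n :: nat
    show "((\<lambda>k. f (n, k)) has_sum r n) UNIV"
      unfolding f_def using norm_summable_imp_has_sum[OF rowabs rows] by simp
  qed
  hence rS: "r sums S" by (rule has_sum_imp_sums)
  have S': "((\<lambda>(k,n). f (n,k)) has_sum S) (Sigma UNIV (\<lambda>_. UNIV))"
    using S has_sum_swap[where f=f and A=UNIV and B=UNIV] by simp
  have "(t has_sum S) UNIV"
  proof (rule has_sum_SigmaD[OF S'])
    fix k :: nat
    show "((\<lambda>n. (\<lambda>(k,n). f (n,k)) (k, n)) has_sum t k) UNIV"
      using norm_summable_imp_has_sum[OF colabs cols] by (simp only: f_def case_prod_conv)
  qed
  hence "t sums S" by (rule has_sum_imp_sums)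
  hence "suminf t = S" by (rule sums_unique[symmetric])
  with rS show ?thesis by (simp only:)
qed



lemma norm_dist_bound: "dist z x \<le> r \<Longrightarrow> norm x \<le> norm z + (r::real)"
  using norm_triangle_ineq4[of z "z - x"] by (simp add: dist_norm)

lemma poch_mono: "(0::real) \<le> a \<Longrightarrow> a \<le> b \<Longrightarrow> pochhammer a k \<le> pochhammer b k"
  unfolding pochhammer_prod by (intro prod_mono) auto

locale zd =
  fixes c e :: real
  assumes c1: "1 \<le> c" and e1: "1 < e"
begin

definition L where "L = ln e"

lemma L_pos: "L > 0" using e1 by (simp add: L_def)
lemma e_exp: "exp L = e" using e1 by (simp add: L_def)

definition den :: "nat \<Rightarrow> complex \<Rightarrow> complex" where
  "den k s = complex_of_real e powr (s + 2 * of_nat k) + (-1) ^ (k + 1)"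

definition tm :: "nat \<Rightarrow> complex \<Rightarrow> complex" where
  "tm k s = complex_of_real c powr (s / 2) * (((- s) gchoose k) /
              (complex_of_real e powr (s + 2 * of_nat k) + (-1) ^ (k + 1)))"

definition Z :: "complex \<Rightarrow> complex" where "Z s = (\<Sum>k. tm k s)"

definition T :: "nat \<Rightarrow> complex \<Rightarrow> complex" where "T K s = (\<Sum>i. tm (i + K) s)"

definition num :: "nat \<Rightarrow> complex \<Rightarrow> complex" where
  "num k s = complex_of_real c powr (s / 2) * ((- s) gchoose k)"

lemma tm_den: "tm k s = num k s / den k s"
  by (simp add: tm_def num_def den_def)

lemma epowr: "complex_of_real e powr w = exp (w * of_real L)"
  using e1 by (simp add: powr_def Ln_of_real L_def)

lemma cpowr: "complex_of_real c powr w = exp (w * of_real (ln c))"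
  using c1 by (simp add: powr_def Ln_of_real)

lemma den_alt: "den k s = exp ((s + 2 * of_nat k) * of_real L) - (-1) ^ k"
  by (simp add: den_def epowr)

lemma norm_den_ge: "norm (den k s) \<ge> exp ((Re s + 2 * real k) * L) - 1"
proof -
  have "norm (exp ((s + 2 * of_nat k) * of_real L)) = exp ((Re s + 2 * real k) * L)"
    by simp
  moreover have "norm (exp ((s + 2 * of_nat k) * of_real L)) - norm ((-1::complex) ^ k)
      \<le> norm (exp ((s + 2 * of_nat k) * of_real L) - (-1) ^ k)"
    by (rule norm_triangle_ineq2)
  ultimately show ?thesis by (simp add: den_alt norm_power)
qed

lemma den_nz: assumes "Re s + 2 * real k > 0" shows "den k s \<noteq> 0"
proof -
  have "exp ((Re s + 2 * real k) * L) > 1" using assms L_pos by simp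
  with norm_den_ge[where k=k and s=s] show ?thesis by auto
qed

lemma gc_holo: "(\<lambda>s. (- s) gchoose k) holomorphic_on A"
  unfolding gbinomial_prod_rev by (intro holomorphic_intros) auto

lemma den_holo: "den k holomorphic_on A"
  unfolding den_alt[abs_def] by (intro holomorphic_intros)

lemma num_holo: "num k holomorphic_on A"
  unfolding num_def cpowr by (intro holomorphic_intros gc_holo) auto

lemma tm_holo: assumes "\<And>s. s \<in> A \<Longrightarrow> den k s \<noteq> 0" shows "tm k holomorphic_on A"
  unfolding tm_den[abs_def] using assms by (intro holomorphic_intros num_holo den_holo) auto

lemma holo_UNIV_analytic: "f holomorphic_on UNIV \<Longrightarrow> f analytic_on A"
  using analytic_on_open[of UNIV f] analytic_on_subset by blast

lemma tm_mero: "tm k meromorphic_on A"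
proof -
  have "(\<lambda>s. num k s / den k s) meromorphic_on A"
    by (intro meromorphic_intros analytic_on_imp_meromorphic_on holo_UNIV_analytic num_holo den_holo)
  then show ?thesis by (simp add: tm_den[abs_def])
qed

definition Mb :: "real \<Rightarrow> nat \<Rightarrow> real" where
  "Mb R k = pochhammer R k / fact k * exp (-2 * L) ^ k"

lemma Mb_summable: "R \<ge> 0 \<Longrightarrow> summable (Mb R)"
  unfolding Mb_def by (rule poch_summable) (use L_pos in auto)

lemma Mb_nonneg: "R \<ge> 0 \<Longrightarrow> Mb R k \<ge> 0"
  unfolding Mb_def by (simp add: poch_nonneg)

definition Cst :: "real \<Rightarrow> real" where
  "Cst R = c powr (R / 2) * (e / (e - 1)) * exp (R * L)"

lemma tm_bound:
  assumes "norm s \<le> R" "R + 1 \<le> 2 * real k"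
  shows "norm (tm k s) \<le> Cst R * Mb R k"
proof -
  have R0: "R \<ge> 0" using assms(1) norm_ge_zero order_trans by blast
  have lc: "ln c \<ge> 0" using c1 by simp
  have "Re s \<le> R" using assms(1) complex_Re_le_cmod order_trans by blast
  have "- Re s \<le> R" using assms(1) abs_Re_le_cmod[of s] by linarith
  have n1: "norm (complex_of_real c powr (s / 2)) \<le> c powr (R / 2)"
  proof -
    have "norm (complex_of_real c powr (s / 2)) = exp (Re s / 2 * ln c)"
      by (simp add: cpowr)
    also have "\<dots> \<le> exp (R / 2 * ln c)"
      using \<open>Re s \<le> R\<close> lc by (intro exp_mono mult_right_mono) auto
    also have "\<dots> = c powr (R / 2)" using c1 by (simp add: powr_def)
    finally show ?thesis .
  qed
  have n2: "norm ((- s) gchoose k) \<le> pochhammer R k / fact k"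
    using norm_gchoose_le[of s k] poch_mono[of "norm s" R k] assms(1)
    by (meson divide_right_mono fact_ge_zero norm_ge_zero order_trans)
  define y where "y = exp ((Re s + 2 * real k) * L)"
  have "(Re s + 2 * real k) \<ge> 1" using \<open>- Re s \<le> R\<close> assms(2) by linarith
  hence "1 * L \<le> (Re s + 2 * real k) * L" using L_pos by (intro mult_right_mono) auto
  hence ye: "y \<ge> e" unfolding y_def using e_exp by (metis exp_le_cancel_iff mult_1)
  have n3: "norm (den k s) \<ge> y - 1" unfolding y_def by (rule norm_den_ge)
  have y1: "y - 1 \<ge> y * ((e - 1) / e)" using ye e1 by (simp add: field_simps)
  have ypos: "y > 0" unfolding y_def by simp
  have pos: "0 < y * ((e - 1) / e)" using ypos e1 by simp
  have le: "y * ((e - 1) / e) \<le> norm (den k s)" using n3 y1 by linarith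
  have "1 / norm (den k s) \<le> 1 / (y * ((e - 1) / e))"
    by (rule divide_left_mono[OF le]) (use pos le in \<open>simp_all only: zero_le_one, metis mult_pos_pos order_less_le_trans\<close>)
  also have "\<dots> = (e / (e - 1)) * (1 / y)" using e1 ypos by (simp add: field_simps)
  also have "1 / y \<le> exp (R * L) * exp (-2 * L) ^ k"
  proof -
    have "1 / y = exp (- (Re s + 2 * real k) * L)" unfolding y_def by (simp only: mult_minus_left exp_minus inverse_eq_divide)
    also have "\<dots> \<le> exp (R * L - 2 * real k * L)"
    proof (intro exp_mono)
      have "(- Re s) * L \<le> R * L" using \<open>- Re s \<le> R\<close> L_pos by (intro mult_right_mono) auto
      then show "- (Re s + 2 * real k) * L \<le> R * L - 2 * real k * L" by (simp add: algebra_simps)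
    qed
    also have "\<dots> = exp (R * L) * exp (-2 * L) ^ k"
      by (simp add: exp_diff exp_minus exp_of_nat_mult[symmetric] field_simps power_mult_distrib)
    finally show ?thesis .
  qed
  hence "(e / (e - 1)) * (1 / y) \<le> (e / (e - 1)) * (exp (R * L) * exp (-2 * L) ^ k)"
    using e1 by (intro mult_left_mono) auto
  finally have n4: "1 / norm (den k s) \<le> (e / (e - 1)) * (exp (R * L) * exp (-2 * L) ^ k)" .
  have "norm (tm k s) = norm (complex_of_real c powr (s / 2)) * norm ((- s) gchoose k) * (1 / norm (den k s))"
    by (simp add: tm_den num_def norm_mult norm_divide)
  also have "\<dots> \<le> c powr (R / 2) * (pochhammer R k / fact k) * ((e / (e - 1)) * (exp (R * L) * exp (-2 * L) ^ k))"
    by (intro mult_mono n1 n2 n4) (auto simp: poch_nonneg R0)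
  also have "\<dots> = Cst R * Mb R k" by (simp add: Cst_def Mb_def mult_ac)
  finally show ?thesis .
qed

lemma Cst_nonneg: "Cst R \<ge> 0"
  using e1 c1 by (simp add: Cst_def)

lemma tm_summable: "summable (\<lambda>k. tm k s)"
proof (rule summable_comparison_test')
  show "summable (\<lambda>k. Cst (norm s) * Mb (norm s) k)"
    by (intro summable_mult Mb_summable) auto
  show "norm (tm n s) \<le> Cst (norm s) * Mb (norm s) n" if "n \<ge> nat \<lceil>norm s + 1\<rceil>" for n
    by (rule tm_bound) (use that in linarith)+
qed

lemma Z_split: "Z s = (\<Sum>k<K. tm k s) + T K s"
  unfolding Z_def T_def using suminf_split_initial_segment[OF tm_summable, of s K] by simp

lemma T_holo:
  assumes "norm z + 2 \<le> 2 * real K"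
  shows "T K holomorphic_on ball z 1"
proof -
  define R where "R = norm z + 1"
  define U where "U = ball (0::complex) (2 * real K)"
  have cU: "cball z 1 \<subseteq> U"
    unfolding U_def using assms norm_dist_bound[of z _ 1] by fastforce
  have denU: "den k s \<noteq> 0" if "s \<in> U" "k \<ge> K" for s k
  proof (rule den_nz)
    have "norm s < 2 * real K" using that U_def by simp
    hence "- Re s < 2 * real K" using abs_Re_le_cmod[of s] by linarith
    then show "Re s + 2 * real k > 0" using that(2) by linarith
  qed
  have ps: "(\<lambda>s. \<Sum>i<n. tm (i + K) s) holomorphic_on U" for n
    by (intro holomorphic_intros tm_holo denU) auto
  have ul: "uniform_limit (cball z 1) (\<lambda>n s. \<Sum>i<n. tm (i + K) s) (\<lambda>s. \<Sum>i. tm (i + K) s) sequentially"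
  proof (rule Weierstrass_m_test)
    fix n s assume "s \<in> cball z 1"
    hence "norm s \<le> R" unfolding R_def using norm_dist_bound[of z s 1] by simp
    then show "norm (tm (n + K) s) \<le> Cst R * Mb R (n + K)"
      by (rule tm_bound) (use assms R_def in auto)
  next
    show "summable (\<lambda>n. Cst R * Mb R (n + K))"
      using Mb_summable[of R] R_def by (intro summable_mult) (auto simp: summable_iff_shift)
  qed
  obtain "continuous_on (cball z 1) (\<lambda>s. \<Sum>i. tm (i + K) s)" "(\<lambda>s. \<Sum>i. tm (i + K) s) holomorphic_on ball z 1"
  proof (rule holomorphic_uniform_limit[OF _ ul])
    show "\<forall>\<^sub>F n in sequentially. continuous_on (cball z 1) (\<lambda>s. \<Sum>i<n. tm (i + K) s) \<and>
          (\<lambda>s. \<Sum>i<n. tm (i + K) s) holomorphic_on ball z 1"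
      using ps cU ball_subset_cball[of z 1]
      by (intro always_eventually allI conjI holomorphic_on_imp_continuous_on)
        (meson holomorphic_on_subset order_trans)+
  qed auto
  then show ?thesis unfolding T_def[abs_def] by simp
qed

end


context zd
begin

definition Pset :: "complex set" where
  "Pset = {s :: complex. \<exists>k::nat. \<exists>n::int.
             s = - 2 * of_nat k + of_int (2 * n + int k) * pi * \<i> / of_real L}"

lemma m1_exp: "((-1)::complex) ^ k = exp (of_nat k * (of_real pi * \<i>))"
  by (simp add: exp_of_nat_mult)

lemma den_zero_iff:
  "den k s = 0 \<longleftrightarrow> (\<exists>n::int. s = - 2 * of_nat k + of_int (2 * n + int k) * pi * \<i> / of_real L)"
proof -
  have L0: "complex_of_real L \<noteq> 0" using L_pos by simp
  have "den k s = 0 \<longleftrightarrow> exp ((s + 2 * of_nat k) * of_real L) = exp (of_nat k * (of_real pi * \<i>))"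
    by (simp add: den_alt m1_exp)
  also have "\<dots> \<longleftrightarrow> (\<exists>n::int. (s + 2 * of_nat k) * of_real L = of_nat k * (of_real pi * \<i>) + of_int (2 * n) * pi * \<i>)"
    by (rule exp_eq)
  also have "\<dots> \<longleftrightarrow> (\<exists>n::int. s = - 2 * of_nat k + of_int (2 * n + int k) * pi * \<i> / of_real L)"
  proof (intro ex_cong1)
    fix n :: int
    show "(s + 2 * of_nat k) * of_real L = of_nat k * (of_real pi * \<i>) + of_int (2 * n) * pi * \<i> \<longleftrightarrow>
          s = - 2 * of_nat k + of_int (2 * n + int k) * pi * \<i> / of_real L"
      using L0 by (auto simp: field_simps)
  qed
  finally show ?thesis .
qed

lemma den_zero_Re: assumes "den k s = 0" shows "Re s = - 2 * real k"
proof -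
  have "exp ((s + 2 * of_nat k) * of_real L) = (-1) ^ k" using assms by (simp add: den_alt)
  hence "norm (exp ((s + 2 * of_nat k) * of_real L)) = 1" by (simp add: norm_power)
  hence "exp ((Re s + 2 * real k) * L) = 1" by simp
  hence "(Re s + 2 * real k) * L = 0" by simp
  then show ?thesis using L_pos by simp
qed

lemma Pset_iff: "s \<in> Pset \<longleftrightarrow> (\<exists>k. den k s = 0)"
  unfolding Pset_def using den_zero_iff by auto

lemma den_open: "open {s. den k s \<noteq> 0}"
proof -
  have "continuous_on UNIV (den k)" by (intro holomorphic_on_imp_continuous_on den_holo)
  then show ?thesis using open_Collect_neq[of "den k" "\<lambda>_. 0"] by auto
qed

lemma K_ok: "norm (z::complex) + 2 \<le> 2 * real (nat \<lceil>norm z\<rceil> + 1)"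
proof -
  have a: "norm z \<le> of_int \<lceil>norm z\<rceil>" by (rule le_of_int_ceiling)
  have b: "real (nat \<lceil>norm z\<rceil>) = of_int \<lceil>norm z\<rceil>" by simp
  have c: "real (nat \<lceil>norm z\<rceil> + 1) = of_int \<lceil>norm z\<rceil> + 1" using b by simp
  have d: "0 \<le> norm z" by simp
  define C where "C = real_of_int \<lceil>norm z\<rceil>"
  have "norm z \<le> C" "0 \<le> norm z" using a d by (auto simp: C_def)
  hence "norm z + 2 \<le> 2 * (C + 1)" by (smt (verit))
  then show ?thesis unfolding c C_def .
qed

lemma Z_eq: "Z = (\<lambda>s. (\<Sum>k<K. tm k s) + T K s)"
  using Z_split by auto

lemma Z_mero_at: "Z meromorphic_on {z}"
proof -
  define K where "K = nat \<lceil>norm z\<rceil> + 1"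
  have hT: "T K holomorphic_on ball z 1" by (rule T_holo) (use K_ok K_def in auto)
  have "T K analytic_on {z}" unfolding analytic_on_def using hT zero_less_one by blast
  hence "(\<lambda>s. (\<Sum>k<K. tm k s) + T K s) meromorphic_on {z}"
    by (intro meromorphic_intros tm_mero analytic_on_imp_meromorphic_on)
  then show ?thesis by (simp add: Z_eq[of K])
qed

lemma Z_mero: "Z meromorphic_on UNIV"
  using Z_mero_at meromorphic_on_meromorphic_at by blast

lemma not_pole: assumes "z \<notin> Pset" shows "\<not> is_pole Z z"
proof -
  define K where "K = nat \<lceil>norm z\<rceil> + 1"
  have hT: "T K holomorphic_on ball z 1" by (rule T_holo) (use K_ok K_def in auto)
  define U where "U = ball z 1 \<inter> (\<Inter>k\<in>{..<K}. {s. den k s \<noteq> 0})"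
  have "open U" unfolding U_def using den_open by (intro open_Int open_INT) auto
  moreover have "z \<in> U" using assms unfolding U_def Pset_iff by auto
  moreover have "Z holomorphic_on U"
  proof -
    have "(\<lambda>s. (\<Sum>k<K. tm k s) + T K s) holomorphic_on U"
      by (intro holomorphic_intros tm_holo holomorphic_on_subset[OF hT]) (auto simp: U_def)
    then show ?thesis by (simp add: Z_eq[of K])
  qed
  ultimately show ?thesis by (rule not_is_pole_holomorphic)
qed

lemma num_nz: assumes "den k z = 0" shows "num k z \<noteq> 0"
proof
  assume "num k z = 0"
  hence "(- z) gchoose k = 0" by (simp add: num_def cpowr)
  hence "pochhammer z k = 0" by (simp add: gbinomial_pochhammer)
  then obtain j where j: "j < k" "z = - of_nat j" by (auto simp: pochhammer_eq_0_iff)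
  have "Re z = - 2 * real k" by (rule den_zero_Re[OF assms])
  with j show False by simp
qed

lemma pole:
  assumes "den k0 z = 0"
  shows "is_pole Z z \<and> zorder Z z = -1"
proof -
  define K where "K = nat \<lceil>norm z\<rceil> + 1"
  have hT: "T K holomorphic_on ball z 1" by (rule T_holo) (use K_ok K_def in auto)
  have Rez: "Re z = - 2 * real k0" by (rule den_zero_Re[OF assms])
  have "2 * real k0 \<le> norm z" using abs_Re_le_cmod[of z] Rez by simp
  hence k0K: "k0 \<in> {..<K}" unfolding K_def by simp linarith
  define H where "H s = (\<Sum>k\<in>{..<K}-{k0}. tm k s) + T K s" for s
  have ZH: "Z s = tm k0 s + H s" for s
    unfolding Z_eq[of K] H_def using k0K by (simp add: sum.remove)
  define U where "U = ball z 1 \<inter> (\<Inter>k\<in>{..<K}-{k0}. {s. den k s \<noteq> 0})"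
  have oU: "open U" unfolding U_def using den_open by (intro open_Int open_INT) auto
  have zU: "z \<in> U" unfolding U_def using den_zero_Re[of _ z] Rez by fastforce
  have hH: "H holomorphic_on U" unfolding H_def[abs_def]
    by (intro holomorphic_intros tm_holo holomorphic_on_subset[OF hT]) (auto simp: U_def)
  have dder: "(den k0 has_field_derivative exp ((z + 2 * of_nat k0) * of_real L) * of_real L) (at z)"
    unfolding den_alt[abs_def] by (auto intro!: derivative_eq_intros)
  have zo: "zorder (den k0) z = 1"
  proof (rule zorder_zero_eqI[OF den_holo open_UNIV UNIV_I])
    show "(deriv ^^ i) (den k0) z = 0" if "i < nat 1" for i using that assms by simp
    show "(deriv ^^ nat 1) (den k0) z \<noteq> 0"
      using DERIV_imp_deriv[OF dder] L_pos by simp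
  qed simp
  have "\<exists>w\<in>UNIV. den k0 w \<noteq> 0" using den_nz[of 1 k0] by auto
  from zorder_exist_zero[where f="den k0" and S=UNIV and z=z, OF den_holo open_UNIV connected_UNIV UNIV_I this] zo
  obtain r where r: "r > 0" "zor_poly (den k0) z holomorphic_on cball z r"
     "\<And>w. w \<in> cball z r \<Longrightarrow> den k0 w = zor_poly (den k0) z w * (w - z) \<and> zor_poly (den k0) z w \<noteq> 0"
    by auto
  define g where "g = zor_poly (den k0) z"
  define V where "V = U \<inter> ball z r"
  have oV: "open V" unfolding V_def using oU by auto
  have zV: "z \<in> V" unfolding V_def using zU r by auto
  define G where "G s = (num k0 s + H s * den k0 s) / g s" for s
  have hG: "G holomorphic_on V" unfolding G_def[abs_def] V_def g_def
    using r(3)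
    by (intro holomorphic_intros num_holo den_holo holomorphic_on_subset[OF hH]
              holomorphic_on_subset[OF r(2)]) auto
  have Gz: "G z \<noteq> 0" unfolding G_def using assms num_nz[OF assms] r(1) r(3)[of z] g_def by simp
  have eq: "Z w = G w * (w - z) powi (-1)" if "w \<in> V" "w \<noteq> z" for w
  proof -
    have gw: "g w \<noteq> 0" "den k0 w = g w * (w - z)" using r(3)[of w] that by (auto simp: V_def g_def)
    have dw: "den k0 w \<noteq> 0" using gw that by simp
    have "Z w = num k0 w / den k0 w + H w" by (simp add: ZH tm_den)
    also have "\<dots> = (num k0 w + H w * den k0 w) / den k0 w" using dw by (simp add: field_simps)
    also have "\<dots> = G w * (w - z) powi (-1)" unfolding G_def using gw that
      by (simp add: power_int_minus field_simps)
    finally show ?thesis .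
  qed
  have "zorder Z z = -1" by (rule zorder_eqI[OF oV zV hG Gz eq])
  moreover have "is_pole Z z"
  proof -
    have "is_pole (\<lambda>w. G w / (w - z) ^ 1) z" by (rule is_pole_basic[OF hG oV zV Gz]) simp
    moreover have "eventually (\<lambda>w. G w / (w - z) ^ 1 = Z w) (at z)"
      using eventually_at_in_open[OF oV zV]
      by eventually_elim (auto simp: eq power_int_minus field_simps)
    ultimately show ?thesis by (rule is_pole_transform) simp
  qed
  ultimately show ?thesis by simp
qed

lemma poles_eq: "{s. is_pole Z s} = Pset"
  using not_pole pole Pset_iff by blast

lemma zorders: "s \<in> Pset \<Longrightarrow> zorder Z s = -1"
  using pole Pset_iff by blast

end


context zd
begin

definition fD :: "nat \<Rightarrow> real" where "fD m = (e ^ m - (-1 / e) ^ m) / sqrt c"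

lemma tm_eq: "tm k s = complex_of_real c powr (s / 2) * (((- s) gchoose k) /
              (complex_of_real e powr (s + 2 * of_nat k) + (-1) ^ (k + 1)))"
  by (simp add: tm_def)

lemma fD_eq: "fD m = (e ^ m - (-1 / e) ^ m) / sqrt c"
  by (simp add: fD_def)

definition u :: "nat \<Rightarrow> real" where "u m = - ((-1) ^ m * exp (-2 * real m * L))"

lemma e_pow: "e ^ m = exp (real m * L)"
  using e_exp exp_of_nat_mult[of m L] by simp

lemma fD_alt: "fD m = exp (real m * L) * (1 + u m) / sqrt c"
proof -
  have a0: "(-1 / e) ^ m = (-1) ^ m / e ^ m" by (rule power_divide)
  have a: "(-1 / e) ^ m = (-1) ^ m * exp (- (real m * L))"
    unfolding a0 e_pow by (simp add: exp_minus divide_inverse)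
  have b: "exp (real m * L) * exp (-2 * real m * L) = exp (- (real m * L))"
    by (simp flip: exp_add)
  have "exp (real m * L) * (1 + u m) = exp (real m * L) - (-1) ^ m * (exp (real m * L) * exp (-2 * real m * L))"
    by (simp add: u_def algebra_simps)
  also have "\<dots> = e ^ m - (-1 / e) ^ m" by (simp only: b a e_pow)
  finally show ?thesis by (simp add: fD_def)
qed

lemma abs_u: "\<bar>u m\<bar> = exp (-2 * real m * L)"
  by (simp add: u_def abs_mult)

lemma abs_u_lt: "m \<ge> 1 \<Longrightarrow> \<bar>u m\<bar> < 1"
  unfolding abs_u using L_pos by simp

lemma abs_u_le: "m \<ge> 1 \<Longrightarrow> \<bar>u m\<bar> \<le> exp (-2 * L)"
  unfolding abs_u using L_pos by simp

lemma one_u_pos: "m \<ge> 1 \<Longrightarrow> 1 + u m > 0"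
  using abs_u_lt[of m] by linarith

lemma fD_pos: "m \<ge> 1 \<Longrightarrow> fD m > 0"
  using one_u_pos[of m] c1 by (simp add: fD_alt)

lemma powr_real_pos: "x > 0 \<Longrightarrow> complex_of_real x powr w = exp (w * of_real (ln x))"
  by (simp add: powr_def Ln_of_real)

lemma row_val:
  assumes "m \<ge> 1"
  shows "complex_of_real (fD m) powr (- s) =
         complex_of_real c powr (s / 2) * exp (- s * of_nat m * of_real L) * complex_of_real (1 + u m) powr (- s)"
proof -
  have p: "1 + u m > 0" using one_u_pos[OF assms] .
  have lf: "ln (fD m) = real m * L + ln (1 + u m) - ln c / 2"
    using p c1 by (simp add: fD_alt ln_mult ln_div ln_sqrt)
  have "complex_of_real (fD m) powr (- s) = exp (- s * of_real (ln (fD m)))"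
    using fD_pos[OF assms] by (simp add: powr_def Ln_of_real)
  also have "\<dots> = exp (s / 2 * of_real (ln c) + (- s * of_nat m * of_real L) + (- s * of_real (ln (1 + u m))))"
    unfolding lf by (intro arg_cong[where f=exp]) (simp add: algebra_simps)
  also have "\<dots> = complex_of_real c powr (s / 2) * exp (- s * of_nat m * of_real L) * complex_of_real (1 + u m) powr (- s)"
    unfolding powr_real_pos[OF p] cpowr by (simp only: exp_add)
  finally show ?thesis .
qed

definition aa :: "complex \<Rightarrow> nat \<Rightarrow> nat \<Rightarrow> complex" where
  "aa s n k = complex_of_real c powr (s / 2) * ((- s) gchoose k) *
      exp (- s * of_nat (Suc n) * of_real L) * complex_of_real (u (Suc n)) ^ k"

lemma rows: "(\<lambda>k. aa s n k) sums (complex_of_real (fD (Suc n)) powr (- s))"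
proof -
  have rv: "complex_of_real (fD (Suc n)) powr (- s) =
         complex_of_real c powr (s / 2) * exp (- s * of_nat (Suc n) * of_real L) * complex_of_real (1 + u (Suc n)) powr (- s)"
    by (rule row_val) simp
  have "norm (complex_of_real (u (Suc n))) < 1" using abs_u_lt[of "Suc n"] by simp
  from gen_binomial_complex[OF this, of "-s"]
  have "(\<lambda>k. ((- s) gchoose k) * complex_of_real (u (Suc n)) ^ k) sums (1 + complex_of_real (u (Suc n))) powr (- s)" .
  from sums_mult[OF this, of "complex_of_real c powr (s / 2) * exp (- s * of_nat (Suc n) * of_real L)"]
  show ?thesis unfolding aa_def rv
    by (simp add: mult_ac)
qed

lemma col_term:
  "exp (- s * of_nat m * of_real L) * complex_of_real (u m) ^ k =
   (-1) ^ k * ((-1) ^ k * exp (- (s + 2 * of_nat k) * of_real L)) ^ m"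
proof -
  have um: "complex_of_real (u m) = - ((-1) ^ m * exp (-2 * of_nat m * of_real L))"
    by (simp add: u_def of_real_exp)
  have "complex_of_real (u m) ^ k = (-1) ^ k * ((-1) ^ m) ^ k * exp (-2 * of_nat m * of_real L) ^ k"
    unfolding um power_minus[of "(-1) ^ m * exp (-2 * of_nat m * of_real L)"] power_mult_distrib
    by (simp only: mult.assoc)
  also have "((-1::complex) ^ m) ^ k = ((-1) ^ k) ^ m"
    by (simp add: power_mult[symmetric] mult.commute)
  also have "exp (-2 * of_nat m * complex_of_real L) ^ k = exp (of_nat k * (-2 * of_nat m * complex_of_real L))"
    by (simp only: exp_of_nat_mult)
  finally have A: "complex_of_real (u m) ^ k = (-1) ^ k * ((-1) ^ k) ^ m * exp (of_nat k * (-2 * of_nat m * of_real L))" .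
  have B: "exp (- (s + 2 * of_nat k) * of_real L) ^ m = exp (of_nat m * (- (s + 2 * of_nat k) * of_real L))"
    by (simp add: exp_of_nat_mult)
  have C: "exp (- s * of_nat m * of_real L) * exp (of_nat k * (-2 * of_nat m * of_real L)) =
           exp (of_nat m * (- (s + 2 * of_nat k) * of_real L))"
    by (simp flip: exp_add) (simp add: algebra_simps)
  show ?thesis unfolding A power_mult_distrib B using C
    by (simp add: mult_ac)
qed

lemma cols:
  assumes "Re s > 0"
  shows "(\<lambda>n. aa s n k) sums tm k s"
proof -
  define w where "w = (-1) ^ k * exp (- (s + 2 * of_nat k) * of_real L)"
  define X where "X = exp ((s + 2 * of_nat k) * of_real L)"
  have X0: "X \<noteq> 0" unfolding X_def by simp
  have wX: "w = (-1) ^ k / X" unfolding w_def X_def by (simp only: mult_minus_left exp_minus divide_inverse)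
  have neg: "(- Re s - 2 * real k) * L < 0" by (rule mult_neg_pos) (use assms L_pos in auto)
  have nw: "norm w < 1"
    unfolding w_def using neg by (simp add: norm_mult norm_power)
  have dk: "den k s = X - (-1) ^ k" unfolding X_def by (simp add: den_alt)
  have dnz: "den k s \<noteq> 0" by (rule den_nz) (use assms in simp)
  have g: "(\<lambda>n. w ^ n) sums (1 / (1 - w))" by (rule geometric_sums[OF nw])
  have g2: "(\<lambda>n. w ^ Suc n) sums (w / (1 - w))"
    using sums_mult[OF g, of w] by (simp add: field_simps)
  have eq: "aa s n k = (complex_of_real c powr (s / 2) * ((- s) gchoose k) * (-1) ^ k) * w ^ Suc n" for n
    unfolding aa_def w_def
    using col_term[of s "Suc n" k] by (simp add: mult_ac)
  have "(\<lambda>n. aa s n k) sums ((complex_of_real c powr (s / 2) * ((- s) gchoose k) * (-1) ^ k) * (w / (1 - w)))"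
    unfolding eq by (rule sums_mult[OF g2])
  moreover have "(complex_of_real c powr (s / 2) * ((- s) gchoose k) * (-1) ^ k) * (w / (1 - w)) = tm k s"
  proof -
    have m1: "((-1::complex) ^ k) * (-1) ^ k = 1" by (rule m1sq)
    have H: "(-1) ^ k * (w / (1 - w)) = 1 / den k s"
      unfolding dk wX using X0 dnz m1 unfolding dk
      by (simp add: field_simps)
    have "(complex_of_real c powr (s / 2) * ((- s) gchoose k) * (-1) ^ k) * (w / (1 - w)) =
          (complex_of_real c powr (s / 2) * ((- s) gchoose k)) * ((-1) ^ k * (w / (1 - w)))"
      by (simp only: mult.assoc)
    also have "\<dots> = (complex_of_real c powr (s / 2) * ((- s) gchoose k)) * (1 / den k s)"
      by (simp only: H)
    also have "\<dots> = tm k s" by (simp add: tm_den num_def)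
    finally show ?thesis .
  qed
  ultimately show ?thesis by simp
qed

lemma aa_bound:
  "norm (aa s n k) \<le> exp (- Re s * L) ^ Suc n * (norm (complex_of_real c powr (s / 2)) * Mb (norm s) k)"
proof -
  have "norm (aa s n k) = norm (complex_of_real c powr (s / 2)) * norm ((- s) gchoose k) *
         exp (- Re s * real (Suc n) * L) * \<bar>u (Suc n)\<bar> ^ k"
    unfolding aa_def by (simp add: norm_mult norm_power)
  also have "\<dots> \<le> norm (complex_of_real c powr (s / 2)) * (pochhammer (norm s) k / fact k) *
         exp (- Re s * real (Suc n) * L) * exp (-2 * L) ^ k"
    by (intro mult_mono norm_gchoose_le power_mono abs_u_le)
       (auto simp: poch_nonneg)
  also have "exp (- Re s * real (Suc n) * L) = exp (- Re s * L) ^ Suc n"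
  proof -
    have "exp (- Re s * L) ^ Suc n = exp (of_nat (Suc n) * (- Re s * L))" by (simp only: exp_of_nat_mult)
    also have "of_nat (Suc n) * (- Re s * L) = - Re s * real (Suc n) * L" by (simp only: mult_ac of_nat_id)
    finally show ?thesis by simp
  qed
  finally show ?thesis by (simp add: Mb_def mult_ac)
qed

lemma dirichlet:
  assumes "Re s > 0"
  shows "(\<lambda>n. complex_of_real (fD (Suc n)) powr (- s)) sums Z s"
proof -
  have q: "exp (- Re s * L) < 1" using assms L_pos by simp
  have "(\<lambda>n. complex_of_real (fD (Suc n)) powr (- s)) sums (\<Sum>k. tm k s)"
  proof (rule swap_lemma[where a = "aa s"])
    show "(\<lambda>k. aa s n k) sums complex_of_real (fD (Suc n)) powr - s" for n by (rule rows)
    show "(\<lambda>n. aa s n k) sums tm k s" for k by (rule cols[OF assms])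
    show "norm (aa s n k) \<le> exp (- Re s * L) ^ Suc n * (norm (complex_of_real c powr (s / 2)) * Mb (norm s) k)" for n k
      by (rule aa_bound)
    show "summable (\<lambda>n. exp (- Re s * L) ^ Suc n)"
      using summable_mult[OF summable_geometric[of "exp (- Re s * L)"], of "exp (- Re s * L)"] q
      by simp
    show "summable (\<lambda>k. norm (complex_of_real c powr (s / 2)) * Mb (norm s) k)"
      by (intro summable_mult Mb_summable) auto
  qed (auto intro!: mult_nonneg_nonneg Mb_nonneg)
  then show ?thesis by (simp add: Z_def)
qed

end


theorem mainTheorem4:
  fixes D :: int and \<epsilon> :: real
  assumes "D > 0" and "squarefree D"
    and "is_fundamental_unit D \<epsilon>"
    and "qnorm D \<epsilon> = -1"
  defines "P \<equiv> {s :: complex. \<exists>k::nat. \<exists>n::int.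
             s = - 2 * of_nat k + of_int (2 * n + int k) * pi * \<i> / of_real (ln \<epsilon>)}"
  shows "\<exists>Z :: complex \<Rightarrow> complex.
           Z meromorphic_on UNIV \<and>
           (\<forall>s. Re s > 0 \<longrightarrow>
              (\<lambda>n. complex_of_real (F_D D \<epsilon> (Suc n)) powr (- s)) sums Z s) \<and>
           (\<forall>s. s \<notin> P \<longrightarrow>
              (\<lambda>k. complex_of_int (qdisc D) powr (s / 2) * (((- s) gchoose k) /
                        (complex_of_real \<epsilon> powr (s + 2 * of_nat k) + (-1) ^ (k + 1))))
                sums Z s) \<and>
           {s. is_pole Z s} = P \<and>
           (\<forall>s\<in>P. zorder Z s = -1)"
proof -
  define c where "c = real_of_int (qdisc D)"
  have e1: "\<epsilon> > 1" using assms(3) by (simp add: is_fundamental_unit_def)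
  have c1: "c \<ge> 1" using assms(1) by (simp add: c_def qdisc_def)
  interpret zd c \<epsilon> by unfold_locales (use e1 c1 in auto)
  have conj: "qconj D \<epsilon> = -1 / \<epsilon>" using assms(4) e1 by (simp add: qnorm_def field_simps)
  have FD: "F_D D \<epsilon> n = fD n" for n
    using fD_eq[of n] by (simp add: F_D_def conj c_def)
  have PP: "P = Pset" by (simp add: P_def Pset_def L_def)
  have tmeq: "(\<lambda>k. complex_of_int (qdisc D) powr (s / 2) * (((- s) gchoose k) /
                        (complex_of_real \<epsilon> powr (s + 2 * of_nat k) + (-1) ^ (k + 1)))) = (\<lambda>k. tm k s)" for s
  proof -
    have cc: "complex_of_int (qdisc D) = complex_of_real c" by (simp add: c_def)
    show ?thesis unfolding cc by (simp only: tm_eq)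
  qed
  show ?thesis
  proof (intro exI[of _ Z] conjI allI impI ballI)
    show "Z meromorphic_on UNIV" by (rule Z_mero)
    show "(\<lambda>n. complex_of_real (F_D D \<epsilon> (Suc n)) powr (- s)) sums Z s" if "Re s > 0" for s
      unfolding FD by (rule dirichlet[OF that])
    show "(\<lambda>k. complex_of_int (qdisc D) powr (s / 2) * (((- s) gchoose k) /
                        (complex_of_real \<epsilon> powr (s + 2 * of_nat k) + (-1) ^ (k + 1)))) sums Z s" for s
      unfolding tmeq Z_def by (rule summable_sums[OF tm_summable])
    show "{s. is_pole Z s} = P" unfolding PP by (rule poles_eq)
    show "zorder Z s = -1" if "s \<in> P" for s using that unfolding PP by (rule zorders)
  qed
qed


end
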